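(* Let $\Gamma=(V,E)$ be a graph of order $n$, minimum degree $\delta$ and maximum degree $\Delta$. (a) If $S$ is an $r$-dependent set in $\Gamma$ with $r\in\{0,\dots,\lfloor\frac{\delta-1}{2}\rfloor\}$, then $\overline{S}$ is a global offensive $(\delta-2r)$-alliance in $\Gamma$. (b) If $S$ is a global offensive $k$-alliance in $\Gamma$ with $k\in\{2-\Delta,\dots,\Delta\}$, then $\overline{S}$ is a $\left\lfloor\frac{\Delta-k}{2}\right\rfloor$-dependent set in $\Gamma$. (c) If $\Gamma$ is $\delta$-regular with $\delta>0$, then for $r\in\{0,\dots,\lfloor\frac{\delta-1}{2}\rfloor\}$, $S$ is an $r$-dependent set in $\Gamma$ if and only if $\overline{S}$ is a global offensive $(\delta-2r)$-alliance in $\Gamma$.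
   Context: Graphs are finite and simple. For $S\subseteq V$ and $v\in V$, $\delta_S(v)$ is the number of neighbours of $v$ in $S$, $\overline{S}=V\setminus S$, and $\partial(S)$ is the set of vertices of $\overline{S}$ with at least one neighbour in $S$. For an integer $k$, a nonempty set $S\subseteq V$ is an offensive $k$-alliance if $\delta_S(v)\ge\delta_{\overline{S}}(v)+k$ for every $v\in\partial(S)$; it is a global offensive $k$-alliance if moreover it is dominating (every vertex of $\overline{S}$ has a neighbour in $S$). A set $S\subseteq V$ is $r$-dependent if $\delta_S(v)\le r$ for every $v\in S$ (the induced subgraph on $S$ has maximum degree at most $r$). *)

theory Defs
  imports Main
begin

definition graph :: "'a set \<Rightarrow> ('a \<Rightarrow> 'a \<Rightarrow> bool) \<Rightarrow> bool" where
  "graph V E \<longleftrightarrow> finite V \<and> (\<forall>u v. E u v \<longrightarrow> u \<in> V \<and> v \<in> V)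
     \<and> (\<forall>u v. E u v \<longrightarrow> E v u) \<and> (\<forall>v. \<not> E v v)"

definition nbrs_in :: "('a \<Rightarrow> 'a \<Rightarrow> bool) \<Rightarrow> 'a set \<Rightarrow> 'a \<Rightarrow> nat" where
  "nbrs_in E S v = card {u \<in> S. E v u}"

definition degree :: "'a set \<Rightarrow> ('a \<Rightarrow> 'a \<Rightarrow> bool) \<Rightarrow> 'a \<Rightarrow> nat" where
  "degree V E v = nbrs_in E V v"

definition min_degree :: "'a set \<Rightarrow> ('a \<Rightarrow> 'a \<Rightarrow> bool) \<Rightarrow> nat" where
  "min_degree V E = Min (degree V E ` V)"

definition max_degree :: "'a set \<Rightarrow> ('a \<Rightarrow> 'a \<Rightarrow> bool) \<Rightarrow> nat" where
  "max_degree V E = Max (degree V E ` V)"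

definition boundary :: "'a set \<Rightarrow> ('a \<Rightarrow> 'a \<Rightarrow> bool) \<Rightarrow> 'a set \<Rightarrow> 'a set" where
  "boundary V E S = {v \<in> V - S. \<exists>u \<in> S. E v u}"

definition offensive_alliance :: "'a set \<Rightarrow> ('a \<Rightarrow> 'a \<Rightarrow> bool) \<Rightarrow> int \<Rightarrow> 'a set \<Rightarrow> bool" where
  "offensive_alliance V E k S \<longleftrightarrow> S \<noteq> {} \<and> S \<subseteq> V \<and>
     (\<forall>v \<in> boundary V E S. int (nbrs_in E S v) \<ge> int (nbrs_in E (V - S) v) + k)"

definition dominating :: "'a set \<Rightarrow> ('a \<Rightarrow> 'a \<Rightarrow> bool) \<Rightarrow> 'a set \<Rightarrow> bool" where
  "dominating V E S \<longleftrightarrow> S \<subseteq> V \<and> (\<forall>v \<in> V - S. \<exists>u \<in> S. E v u)"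

definition global_offensive_alliance :: "'a set \<Rightarrow> ('a \<Rightarrow> 'a \<Rightarrow> bool) \<Rightarrow> int \<Rightarrow> 'a set \<Rightarrow> bool" where
  "global_offensive_alliance V E k S \<longleftrightarrow> offensive_alliance V E k S \<and> dominating V E S"

definition r_dependent :: "'a set \<Rightarrow> ('a \<Rightarrow> 'a \<Rightarrow> bool) \<Rightarrow> int \<Rightarrow> 'a set \<Rightarrow> bool" where
  "r_dependent V E r S \<longleftrightarrow> S \<subseteq> V \<and> (\<forall>v \<in> S. int (nbrs_in E S v) \<le> r)"

end

theory Submission
  imports Defs
begin

lemma split_deg:
  assumes g: "graph V E" and v: "v \<in> V" and S: "S \<subseteq> V"
  shows "nbrs_in E S v + nbrs_in E (V - S) v = degree V E v"
proof -
  have f: "finite V" using g by (simp add: graph_def)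
  have "{u \<in> V. E v u} = {u \<in> S. E v u} \<union> {u \<in> V - S. E v u}" using S by auto
  moreover have "card ({u \<in> S. E v u} \<union> {u \<in> V - S. E v u}) = card {u \<in> S. E v u} + card {u \<in> V - S. E v u}"
    by (rule card_Un_disjoint) (use f S in \<open>auto intro: finite_subset\<close>)
  ultimately show ?thesis by (simp add: nbrs_in_def degree_def)
qed

lemma mind: assumes g: "graph V E" and v: "v \<in> V" shows "min_degree V E \<le> degree V E v"
  using g v by (simp add: min_degree_def graph_def)

lemma maxd: assumes g: "graph V E" and v: "v \<in> V" shows "degree V E v \<le> max_degree V E"
  using g v by (simp add: max_degree_def graph_def)

lemma nbr_pos: "nbrs_in E S v > 0 \<Longrightarrow> finite S \<Longrightarrow> \<exists>u\<in>S. E v u"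
  by (auto simp: nbrs_in_def card_gt_0_iff)

lemma nbr_pos2: "\<exists>u\<in>S. E v u \<Longrightarrow> finite S \<Longrightarrow> nbrs_in E S v > 0"
  by (auto simp: nbrs_in_def card_gt_0_iff)

lemma partA:
  assumes g: "graph V E" and ne: "V \<noteq> {}"
    and d: "r_dependent V E r S" and r0: "0 \<le> r" and r1: "r \<le> (int (min_degree V E) - 1) div 2"
  shows "global_offensive_alliance V E (int (min_degree V E) - 2 * r) (V - S)"
proof -
  have f: "finite V" using g by (simp add: graph_def)
  have S: "S \<subseteq> V" and dS: "\<forall>v\<in>S. int (nbrs_in E S v) \<le> r" using d by (auto simp: r_dependent_def)
  have rl: "r < int (min_degree V E)" using r1 r0 by linarith
  have key: "\<And>v. v \<in> S \<Longrightarrow> int (nbrs_in E (V - S) v) \<ge> int (min_degree V E) - r"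
  proof -
    fix v assume v: "v \<in> S"
    have "nbrs_in E S v + nbrs_in E (V - S) v = degree V E v" using split_deg[OF g _ S] v S by auto
    moreover have "min_degree V E \<le> degree V E v" using mind[OF g] v S by auto
    moreover have "int (nbrs_in E S v) \<le> r" using dS v by auto
    ultimately show "int (nbrs_in E (V - S) v) \<ge> int (min_degree V E) - r" by linarith
  qed
  have nb: "\<And>v. v \<in> S \<Longrightarrow> \<exists>u \<in> V - S. E v u"
    using key rl f by (intro nbr_pos) (fastforce, auto)
  have "V - S \<noteq> {}"
  proof
    assume "V - S = {}"
    then obtain v where "v \<in> S" using ne S by blast
    with nb \<open>V - S = {}\<close> show False by blast
  qed
  moreover have VS: "V - (V - S) = S" using S by auto
  moreover have "\<forall>v \<in> boundary V E (V - S). int (nbrs_in E (V - S) v) \<ge> int (nbrs_in E (V - (V - S)) v) + (int (min_degree V E) - 2 * r)"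
  proof
    fix v assume "v \<in> boundary V E (V - S)"
    then have v: "v \<in> S" using VS by (auto simp: boundary_def)
    show "int (nbrs_in E (V - S) v) \<ge> int (nbrs_in E (V - (V - S)) v) + (int (min_degree V E) - 2 * r)"
      using key[OF v] dS v VS by auto
  qed
  ultimately show ?thesis using nb
    by (auto simp: global_offensive_alliance_def offensive_alliance_def dominating_def)
qed

lemma partB:
  assumes g: "graph V E" and a: "global_offensive_alliance V E k S"
  shows "r_dependent V E ((int (max_degree V E) - k) div 2) (V - S)"
proof -
  have f: "finite V" using g by (simp add: graph_def)
  have S: "S \<subseteq> V" and dom: "\<forall>v \<in> V - S. \<exists>u \<in> S. E v u"
    and off: "\<forall>v \<in> boundary V E S. int (nbrs_in E S v) \<ge> int (nbrs_in E (V - S) v) + k"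
    using a by (auto simp: global_offensive_alliance_def offensive_alliance_def dominating_def)
  have "\<forall>v \<in> V - S. int (nbrs_in E (V - S) v) \<le> (int (max_degree V E) - k) div 2"
  proof
    fix v assume v: "v \<in> V - S"
    then have "v \<in> boundary V E S" using dom by (auto simp: boundary_def)
    then have h1: "int (nbrs_in E S v) \<ge> int (nbrs_in E (V - S) v) + k" using off by auto
    have h2: "nbrs_in E S v + nbrs_in E (V - S) v = degree V E v" using split_deg[OF g _ S] v by auto
    have h3: "degree V E v \<le> max_degree V E" using maxd[OF g] v by auto
    have "2 * int (nbrs_in E (V - S) v) \<le> int (max_degree V E) - k" using h1 h2 h3 by linarith
    then show "int (nbrs_in E (V - S) v) \<le> (int (max_degree V E) - k) div 2" by linarith
  qed
  then show ?thesis by (auto simp: r_dependent_def)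
qed

lemma partC:
  assumes g: "graph V E" and reg: "\<forall>v \<in> V. degree V E v = min_degree V E"
    and S: "S \<subseteq> V"
    and a: "global_offensive_alliance V E (int (min_degree V E) - 2 * r) (V - S)"
  shows "r_dependent V E r S"
proof -
  have VS: "V - (V - S) = S" using S by auto
  have dom: "\<forall>v \<in> S. \<exists>u \<in> V - S. E v u"
    and off: "\<forall>v \<in> boundary V E (V - S). int (nbrs_in E (V - S) v) \<ge> int (nbrs_in E S v) + (int (min_degree V E) - 2 * r)"
    using a VS by (auto simp: global_offensive_alliance_def offensive_alliance_def dominating_def)
  have "\<forall>v \<in> S. int (nbrs_in E S v) \<le> r"
  proof
    fix v assume v: "v \<in> S"
    then have "v \<in> boundary V E (V - S)" using dom S by (auto simp: boundary_def)
    then have h1: "int (nbrs_in E (V - S) v) \<ge> int (nbrs_in E S v) + (int (min_degree V E) - 2 * r)" using off by auto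
    have h2: "nbrs_in E S v + nbrs_in E (V - S) v = degree V E v" using split_deg[OF g _ S] v S by auto
    have h3: "degree V E v = min_degree V E" using reg v S by auto
    show "int (nbrs_in E S v) \<le> r" using h1 h2 h3 by linarith
  qed
  then show ?thesis using S by (auto simp: r_dependent_def)
qed

theorem mainTheorem2:
  fixes V :: "'a set" and E :: "'a \<Rightarrow> 'a \<Rightarrow> bool"
  assumes "graph V E" and "V \<noteq> {}"
  shows
   "(\<forall>S r. r_dependent V E r S \<and> 0 \<le> r \<and> r \<le> (int (min_degree V E) - 1) div 2 \<longrightarrow>
        global_offensive_alliance V E (int (min_degree V E) - 2 * r) (V - S))
    \<and> (\<forall>S k. global_offensive_alliance V E k S \<and> 2 - int (max_degree V E) \<le> k \<and> k \<le> int (max_degree V E) \<longrightarrow>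
        r_dependent V E ((int (max_degree V E) - k) div 2) (V - S))
    \<and> ((\<forall>v \<in> V. degree V E v = min_degree V E) \<and> min_degree V E > 0 \<longrightarrow>
        (\<forall>S r. S \<subseteq> V \<and> 0 \<le> r \<and> r \<le> (int (min_degree V E) - 1) div 2 \<longrightarrow>
           (r_dependent V E r S \<longleftrightarrow> global_offensive_alliance V E (int (min_degree V E) - 2 * r) (V - S))))"
  using partA[OF assms] partB[OF assms(1)] partC[OF assms(1)] by blast

end
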